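(* For $\alpha\in(0,\pi/2]$ and $d\in\mathbb{R}$ let $$f_\alpha(d)=960\alpha-8d^2(d^4-4d^2+20)\sin\alpha+d^2(3d^4-12d^2-4)\sin(2\alpha).$$ Then for every $\alpha\in(0,\pi/2]$, $f_\alpha(d)<0$ for all $d\in[5/2,\infty)$. *)

theory Defs
  imports Complex_Main
begin

definition f_alpha :: "real \<Rightarrow> real \<Rightarrow> real" where
  "f_alpha \<alpha> d = 960 * \<alpha> - 8 * d^2 * (d^4 - 4 * d^2 + 20) * sin \<alpha>
                 + d^2 * (3 * d^4 - 12 * d^2 - 4) * sin (2 * \<alpha>)"

end

theory Submission
  imports Defs "HOL-Analysis.Analysis"
begin

lemma sin_lb:
  fixes x :: real assumes "0 < x" "x \<le> 2"
  shows "x - x^3/6 \<le> sin x"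
proof -
  obtain t where t: "0 < t" "t < x"
    "sin x = (\<Sum>m<4. sin_coeff m * x ^ m) + (sin (t + 1/2 * real 4 * pi) / fact 4) * x ^ 4"
    using Maclaurin_sin_expansion3[of 4 x] assms by auto
  have st: "0 \<le> sin t" using t assms pi_gt3 by (intro sin_ge_zero) auto
  have e: "sin (t + 1/2 * real 4 * pi) = sin t"
    using sin_periodic[of t] by (simp add: algebra_simps)
  have "(\<Sum>m<4. sin_coeff m * x ^ m) = x - x^3/6"
    by (simp add: sin_coeff_def lessThan_nat_numeral fact_numeral)
  with t e st show ?thesis by simp
qed

lemma cos_ub:
  fixes x :: real assumes "0 < x" "x \<le> pi/2"
  shows "cos x \<le> 1 - x^2/2 + x^4/24"
proof -
  obtain t where t: "0 < t" "t < x"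
    "cos x = (\<Sum>m<6. cos_coeff m * x ^ m) + (cos (t + 1/2 * real 6 * pi) / fact 6) * x ^ 6"
    using Maclaurin_cos_expansion2[of x 6] assms by auto
  have ct: "0 \<le> cos t" using t assms by (intro cos_ge_zero) auto
  have e: "cos (t + 1/2 * real 6 * pi) = - cos t"
  proof -
    have "t + 1/2 * real 6 * pi = (t + pi) + 2*pi" by simp
    then show ?thesis by (simp only: cos_periodic cos_periodic_pi)
  qed
  have "(\<Sum>m<6. cos_coeff m * x ^ m) = 1 - x^2/2 + x^4/24"
    by (simp add: cos_coeff_def lessThan_nat_numeral fact_numeral)
  with t e ct show ?thesis by (simp add: mult_nonneg_nonneg)
qed

lemma poly_ineq:
  fixes x::real assumes "0 \<le> x" "x \<le> 2.4675"
  shows "960 < (1 - x/6)*(1703.125 - 477.34375*(1-x/2+x^2/24))"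
proof -
  define b :: real where "b = 2.4675"
  have "0 \<le> (x-b)^2*(x+2*b)" using assms by (simp add: b_def)
  also have "(x-b)^2*(x+2*b) = x^3 - 3*b^2*x + 2*b^3"
    by (simp add: algebra_simps power2_eq_square power3_eq_cube)
  finally have h1: "0 \<le> x^3 - 3*b^2*x + 2*b^3" .
  have "0 \<le> x*(b-x)" using assms by (simp add: b_def)
  hence h2: "0 \<le> b*x - x^2" by (simp add: algebra_simps power2_eq_square)
  have e: "(1 - x/6)*(1703.125 - 477.34375*(1-x/2+x^2/24)) = 1225.78125 + (238.671875 - 1225.78125/6)*x - (477.34375/24 + 238.671875/6) * x^2 + 477.34375/144*x^3"
    by (simp add: field_simps power2_eq_square power3_eq_cube)
  show ?thesis unfolding e using h1 h2 assms unfolding b_def by (simp add: power_divide)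
qed

theorem lemma2:
  fixes \<alpha> d :: real
  assumes "0 < \<alpha>" and "\<alpha> \<le> pi / 2" and "5 / 2 \<le> d"
  shows "f_alpha \<alpha> d < 0"
proof -
  define S where "S = sin \<alpha>"
  define C where "C = cos \<alpha>"
  define u where "u = d^2"
  have pi1: "pi \<le> 3.1415926535899" using pi_approx by simp
  have a2: "\<alpha> \<le> 1.58" using assms(2) pi1 by simp
  have u0: "6.25 \<le> u" unfolding u_def using power_mono[OF assms(3), of 2] by (simp add: power_divide)
  have S0: "0 < S" unfolding S_def using assms pi_gt3 by (intro sin_gt_zero) auto
  have C0: "0 \<le> C" unfolding C_def using assms by (intro cos_ge_zero) auto
  have C1: "C \<le> 1" unfolding C_def by simp
  have f: "f_alpha \<alpha> d = 960*\<alpha> - S * (u * ((8-6*C)*(u^2-4*u) + 160 + 8*C))"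
    unfolding f_alpha_def S_def C_def u_def sin_double
    by (simp add: algebra_simps power2_eq_square power4_eq_xxxx)
  have "6.25*2.25 \<le> u*(u-4)" using u0 by (intro mult_mono) auto
  hence q: "14.0625 \<le> u^2-4*u" by (simp add: algebra_simps power2_eq_square)
  have "(8-6*C)*14.0625 \<le> (8-6*C)*(u^2-4*u)" using q C1 by (intro mult_left_mono) auto
  hence B: "272.5 - 76.375*C \<le> (8-6*C)*(u^2-4*u) + 160 + 8*C" by simp
  have "6.25 * ((8-6*C)*(u^2-4*u) + 160 + 8*C) \<le> u * ((8-6*C)*(u^2-4*u) + 160 + 8*C)"
    using u0 B C1 by (intro mult_right_mono) auto
  with B have K: "1703.125 - 477.34375*C \<le> u * ((8-6*C)*(u^2-4*u) + 160 + 8*C)" by simp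
  have sl: "\<alpha> - \<alpha>^3/6 \<le> S" unfolding S_def using sin_lb assms a2 by simp
  have cu: "C \<le> 1 - \<alpha>^2/2 + \<alpha>^4/24" unfolding C_def using cos_ub assms by simp
  have x2: "\<alpha>^2 \<le> 2.4675"
  proof -
    have "\<alpha>^2 \<le> (3.1415926535899/2)^2" using assms pi1 by (intro power_mono) auto
    thus ?thesis by (simp add: power_divide)
  qed
  have P: "960 < (1 - \<alpha>^2/6)*(1703.125 - 477.34375*(1-\<alpha>^2/2+(\<alpha>^2)^2/24))"
    using poly_ineq[of "\<alpha>^2"] x2 by simp
  have P0: "0 \<le> 1703.125 - 477.34375*(1-\<alpha>^2/2+\<alpha>^4/24)"
  proof -
    have "(\<alpha>^2)^2 \<le> 2.4675^2" using x2 by (intro power_mono) auto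
    hence h4: "\<alpha>^4 \<le> 7" by (simp add: power_divide flip: power_mult)
    have G: "\<And>y z::real. 0 \<le> y \<Longrightarrow> z \<le> 7 \<Longrightarrow> 0 \<le> 1703.125 - 477.34375*(1-y/2+z/24)"
      by simp
    show ?thesis using G[OF zero_le_power2 h4] .
  qed
  have sl0: "0 \<le> \<alpha> - \<alpha>^3/6"
  proof -
    have "\<alpha>^2 \<le> 6" using x2 by simp
    hence "\<alpha>*\<alpha>^2 \<le> \<alpha>*6" using assms(1) by (intro mult_left_mono) auto
    thus ?thesis by (simp add: power3_eq_cube power2_eq_square)
  qed
  have "(\<alpha> - \<alpha>^3/6) * (1703.125 - 477.34375*(1-\<alpha>^2/2+\<alpha>^4/24)) \<le> S * (1703.125 - 477.34375*C)"
    using sl cu P0 sl0 by (intro mult_mono) auto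
  also have "\<dots> \<le> S * (u * ((8-6*C)*(u^2-4*u) + 160 + 8*C))"
    using K S0 by (intro mult_left_mono) auto
  finally have L: "(\<alpha> - \<alpha>^3/6) * (1703.125 - 477.34375*(1-\<alpha>^2/2+\<alpha>^4/24)) \<le> S * (u * ((8-6*C)*(u^2-4*u) + 160 + 8*C))" .
  have "\<alpha> * 960 < \<alpha> * ((1 - \<alpha>^2/6)*(1703.125 - 477.34375*(1-\<alpha>^2/2+(\<alpha>^2)^2/24)))"
    using P assms(1) by (intro mult_strict_left_mono) auto
  also have "\<dots> = (\<alpha> - \<alpha>^3/6) * (1703.125 - 477.34375*(1-\<alpha>^2/2+\<alpha>^4/24))"
    by (simp add: algebra_simps power2_eq_square power3_eq_cube power4_eq_xxxx)
  finally show ?thesis using L f by simp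
qed

end
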